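(* Every ultrametric space $X$ (i.e.\ a metric space with $d(x,z)\le\max(d(x,y),d(y,z))$ for all $x,y,z$) satisfies $h_\infty(X)=0$.
   Context: Coarse entropy: for $\delta>0$, $P(n,\delta,x_0)$ is the set of $\delta$-paths $(x_0,\dots,x_n)$ (sequences with $d(x_i,x_{i+1})\le\delta$) starting at $x_0$, with distance $\max_i d(x_i,y_i)$; $s(n,R,\delta,x_0)$ is the supremum of cardinalities of $R$-separated subsets (distinct elements at distance $\ge R$) of $P(n,\delta,x_0)$; $h_\infty(X)=\lim_{\delta\to\infty}\lim_{R\to\infty}\limsup_{n\to\infty}\frac1n\log s(n,R,\delta,x_0)$, independent of $x_0$. *)

theory Defs
  imports "HOL-Analysis.Analysis" "HOL-Library.Extended_Nat"
begin

text \<open>delta-paths (x_0,...,x_n) starting at x0, represented as functions nat => 'a,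
  normalized to be constantly x0 beyond index n so that each path has a unique representative.\<close>
definition delta_paths :: "nat \<Rightarrow> real \<Rightarrow> 'a::metric_space \<Rightarrow> (nat \<Rightarrow> 'a) set" where
  "delta_paths n \<delta> x0 = {p. p 0 = x0 \<and> (\<forall>i<n. dist (p i) (p (Suc i)) \<le> \<delta>) \<and> (\<forall>i>n. p i = x0)}"

definition path_dist :: "nat \<Rightarrow> (nat \<Rightarrow> 'a::metric_space) \<Rightarrow> (nat \<Rightarrow> 'a) \<Rightarrow> real" where
  "path_dist n p q = Max ((\<lambda>i. dist (p i) (q i)) ` {..n})"

definition path_separated :: "nat \<Rightarrow> real \<Rightarrow> (nat \<Rightarrow> 'a::metric_space) set \<Rightarrow> bool" where
  "path_separated n R S = (\<forall>p\<in>S. \<forall>q\<in>S. p \<noteq> q \<longrightarrow> R \<le> path_dist n p q)"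

definition ecard :: "'b set \<Rightarrow> enat" where
  "ecard S = (if finite S then enat (card S) else \<infinity>)"

definition sep_num :: "nat \<Rightarrow> real \<Rightarrow> real \<Rightarrow> 'a::metric_space \<Rightarrow> enat" where
  "sep_num n R \<delta> x0 = (SUP S \<in> {S. S \<subseteq> delta_paths n \<delta> x0 \<and> path_separated n R S}. ecard S)"

definition elog :: "enat \<Rightarrow> ereal" where
  "elog x = (case x of enat k \<Rightarrow> (if k = 0 then -\<infinity> else ereal (ln (real k))) | \<infinity> \<Rightarrow> \<infinity>)"

definition coarse_entropy :: "'a::metric_space \<Rightarrow> ereal" where
  "coarse_entropy x0 =
     Lim at_top (\<lambda>\<delta>::real. Lim at_top (\<lambda>R::real.
        limsup (\<lambda>n. ereal (1 / real n) * elog (sep_num n R \<delta> x0))))"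

end

theory Submission
  imports Defs
begin

lemma path_ball:
  fixes x0 :: "'a::metric_space"
  assumes ultra: "\<forall>x y z::'a. dist x z \<le> max (dist x y) (dist y z)"
    and d: "\<delta> \<ge> 0" and p: "p \<in> delta_paths n \<delta> x0"
  shows "dist x0 (p i) \<le> \<delta>"
proof (induction i)
  case 0 then show ?case using p d by (simp add: delta_paths_def)
next
  case (Suc i)
  show ?case
  proof (cases "i < n")
    case True
    then have "dist (p i) (p (Suc i)) \<le> \<delta>" using p by (simp add: delta_paths_def)
    moreover have "dist x0 (p (Suc i)) \<le> max (dist x0 (p i)) (dist (p i) (p (Suc i)))"
      using ultra by blast
    ultimately show ?thesis using Suc by linarith
  next
    case False
    then have "p (Suc i) = x0" using p by (simp add: delta_paths_def)
    then show ?thesis using d by simp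
  qed
qed

lemma path_dist_le:
  fixes x0 :: "'a::metric_space"
  assumes ultra: "\<forall>x y z::'a. dist x z \<le> max (dist x y) (dist y z)"
    and d: "\<delta> \<ge> 0" and p: "p \<in> delta_paths n \<delta> x0" and q: "q \<in> delta_paths n \<delta> x0"
  shows "path_dist n p q \<le> \<delta>"
  unfolding path_dist_def
proof (subst Max_le_iff, simp, simp, intro ballI)
  fix a assume "a \<in> (\<lambda>i. dist (p i) (q i)) ` {..n}"
  then obtain i where a: "a = dist (p i) (q i)" by auto
  have "dist (p i) (q i) \<le> max (dist (p i) x0) (dist x0 (q i))" using ultra by blast
  moreover have "dist x0 (p i) \<le> \<delta>" "dist x0 (q i) \<le> \<delta>"
    using path_ball[OF ultra d p] path_ball[OF ultra d q] by auto
  ultimately show "a \<le> \<delta>" using a by (simp add: dist_commute)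
qed

lemma sep_one:
  fixes x0 :: "'a::metric_space"
  assumes ultra: "\<forall>x y z::'a. dist x z \<le> max (dist x y) (dist y z)"
    and d: "\<delta> \<ge> 0" and R: "R > \<delta>"
  shows "sep_num n R \<delta> x0 = 1"
  unfolding sep_num_def
proof (rule antisym)
  show "(SUP S \<in> {S. S \<subseteq> delta_paths n \<delta> x0 \<and> path_separated n R S}. ecard S) \<le> 1"
  proof (rule SUP_least)
    fix S assume "S \<in> {S. S \<subseteq> delta_paths n \<delta> x0 \<and> path_separated n R S}"
    then have S: "S \<subseteq> delta_paths n \<delta> x0" "path_separated n R S" by auto
    have eq: "\<And>p q. p \<in> S \<Longrightarrow> q \<in> S \<Longrightarrow> p = q"
    proof (rule ccontr)
      fix p q assume "p \<in> S" "q \<in> S" "p \<noteq> q"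
      then have "R \<le> path_dist n p q" using S(2) by (simp add: path_separated_def)
      moreover have "path_dist n p q \<le> \<delta>" using path_dist_le[OF ultra d] S(1) \<open>p \<in> S\<close> \<open>q \<in> S\<close> by blast
      ultimately show False using R by linarith
    qed
    have "finite S \<and> card S \<le> 1"
    proof (cases "S = {}")
      case True then show ?thesis by simp
    next
      case False
      then obtain p where "p \<in> S" by auto
      then have "S = {p}" using eq by blast
      then show ?thesis by simp
    qed
    then show "ecard S \<le> 1" by (simp add: ecard_def one_enat_def)
  qed
next
  have "{\<lambda>_. x0} \<in> {S. S \<subseteq> delta_paths n \<delta> x0 \<and> path_separated n R S}"
    using d by (auto simp: delta_paths_def path_separated_def)
  moreover have "ecard {\<lambda>_. x0} = 1" by (simp add: ecard_def one_enat_def)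
  ultimately show "1 \<le> (SUP S \<in> {S. S \<subseteq> delta_paths n \<delta> x0 \<and> path_separated n R S}. ecard S)"
    by (metis SUP_upper)
qed

theorem mainTheorem9:
  fixes x0 :: "'a::metric_space"
  assumes ultra: "\<forall>x y z::'a. dist x z \<le> max (dist x y) (dist y z)"
  shows "coarse_entropy x0 = 0"
proof -
  have inner: "Lim at_top (\<lambda>R::real.
        limsup (\<lambda>n. ereal (1 / real n) * elog (sep_num n R \<delta> x0))) = 0" if d: "\<delta> \<ge> 0" for \<delta> :: real
  proof (rule tendsto_Lim[OF trivial_limit_at_top_linorder], rule tendsto_eventually)
    show "\<forall>\<^sub>F R in at_top. limsup (\<lambda>n. ereal (1 / real n) * elog (sep_num n R \<delta> x0)) = 0"
      using eventually_gt_at_top[of \<delta>]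
    proof (rule eventually_mono)
      fix R assume "\<delta> < R"
      then have "\<And>n. ereal (1 / real n) * elog (sep_num n R \<delta> x0) = 0"
        using sep_one[OF ultra d, of R] by (simp add: elog_def one_enat_def)
      then have "(\<lambda>n. ereal (1 / real n) * elog (sep_num n R \<delta> x0)) = (\<lambda>n. 0)" by (rule ext)
      then show "limsup (\<lambda>n. ereal (1 / real n) * elog (sep_num n R \<delta> x0)) = 0"
        by (simp add: Limsup_const)
    qed
  qed
  show ?thesis unfolding coarse_entropy_def
    apply (rule tendsto_Lim[OF trivial_limit_at_top_linorder], rule tendsto_eventually)
    using eventually_ge_at_top[of "0::real"] by (rule eventually_mono) (rule inner)
qed

end
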